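(* Let $P,PA$ be labelings and $c$ a command with $P;PA\vdash_{\mathtt{true}}c$, and let $\rho_1\sim_P\rho_2$ and $\mu_1\sim_{PA}\mu_2$. Then $\langle c,\rho_1,\mu_1,\mathtt{true}\rangle\approx_i\langle c,\rho_2,\mu_2,\mathtt{true}\rangle$, i.e., for every directive list $D$ and observation lists $O_1,O_2$, if $\langle c,\rho_k,\mu_k,\mathtt{true}\rangle\xrightarrow[D]{O_k}{}_i^*$ some configuration for $k=1,2$ (ideal semantics w.r.t. $P$), then $O_1=O_2$.
   Context: Language AWhile: scalar variables $X\in\mathcal V$, arrays $a\in\mathcal A$; $e::=n\mid X\mid\mathrm{op}_{\mathbb N}(e,\dots,e)\mid be\,?\,e_1:e_2$; $be::=\mathtt{true}\mid\mathtt{false}\mid\mathrm{cmp}(e,e)\mid\mathrm{op}_{\mathbb B}(be,\dots,be)$; $c::=\mathtt{skip}\mid X:=e\mid c_1;c_2\mid\mathtt{if}\ be\ \mathtt{then}\ c_1\ \mathtt{else}\ c_2\mid\mathtt{while}\ be\ \mathtt{do}\ c\mid X\leftarrow a[e]\mid a[e]\leftarrow e'$. Scalar state $\rho:\mathcal V\to\mathbb N$; array state $\mu$ with sizes $|a|_\mu$ and values $\mu(a)[i]$; $[\![\cdot]\!]_\rho$ pure evaluation. Labels: $\mathtt{true}$=public, $\mathtt{false}$=secret; $\ell_1\sqsubseteq\ell_2$ iff $\ell_2=\mathtt{true}\Rightarrow\ell_1=\mathtt{true}$; $\ell_1\sqcup\ell_2=\ell_1\wedge\ell_2$. $P:\mathcal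 V\to$ labels, $PA:\mathcal A\to$ labels; $P(e),P(be)$ public iff all variables occurring are public. $\rho_1\sim_P\rho_2$ iff they agree on all public scalar variables; $\mu_1\sim_{PA}\mu_2$ iff they agree on sizes and contents of all public arrays. IFC typing $P;PA\vdash_{pc}c$: $\mathtt{skip}$; $X:=e$ if $pc\sqcup P(e)\sqsubseteq P(X)$; $c_1;c_2$ if both typed under $pc$; $\mathtt{if}$ if both branches typed under $pc\sqcup P(be)$; $\mathtt{while}$ if body typed under $pc\sqcup P(be)$; $X\leftarrow a[i]$ if $pc\sqcup P(i)\sqcup PA(a)\sqsubseteq P(X)$; $a[i]\leftarrow e$ if $pc\sqcup P(i)\sqcup P(e)\sqsubseteq PA(a)$. Ideal semantics w.r.t. $P$: configurations $\langle c,\rho,\mu,\beta\rangle$; steps $\xrightarrow[d]{o}{}_i$ with optional observation $o\in\{\mathrm{branch}(v),\mathrm{read}(a,i),\mathrm{write}(a,i)\}$ and optional directive $d\in\{\mathit{step},\mathit{force},\mathrm{load}(a',j),\mathrm{store}(a',j)\}$. $X:=e\to\mathtt{skip}$ with $\rho[X\mapsto[\![e]\!]_\rho]$; $c_1;c_2\to c_1';c_2$ whenever $c_1\to c_1'$; $\mathtt{skip};c\to c$; $\mathtt{while}\ be\ \mathtt{do}\ c\to\mathtt{if}\ be\ \mathtt{then}\ (c;\mathtt{while}\ be\ \mathtt{do}\ c)\ \mathtt{else}\ \mathtt{skip}$ (no obs/directive, flag kept). Conditional: $v=(P(be)\vee\neg\beta)\wedge[\![be]\!]_\rho$; $\mathit{step}$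 goes to branch $v$; $\mathit{force}$ goes to branch $\neg v$ and sets $\beta:=\mathtt{true}$; obs $\mathrm{branch}(v)$. Read $X\leftarrow a[ie]$ with $\mathit{step}$: $i=0$ if $(P(ie)=\mathtt{false}\vee P(X)=\mathtt{true})\wedge\beta$, else $[\![ie]\!]_\rho$; requires $i<|a|_\mu$; $X:=\mu(a)[i]$; obs $\mathrm{read}(a,i)$. Read with $\mathrm{load}(a',j)$: requires $\beta=\mathtt{true}$, $P(ie)=\mathtt{true}$, $P(X)=\mathtt{false}$, $i=[\![ie]\!]_\rho\ge|a|_\mu$, $j<|a'|_\mu$; $X:=\mu(a')[j]$; obs $\mathrm{read}(a,i)$. Write $a[ie]\leftarrow ae$ with $\mathit{step}$: $i=0$ if $(P(ie)=\mathtt{false}\vee P(ae)=\mathtt{false})\wedge\beta$, else $[\![ie]\!]_\rho$; requires $i<|a|_\mu$; $\mu[a[i]\mapsto[\![ae]\!]_\rho]$; obs $\mathrm{write}(a,i)$. Write with $\mathrm{store}(a',j)$: requires $\beta=\mathtt{true}$, $P(ie)=P(ae)=\mathtt{true}$, $i\ge|a|_\mu$, $j<|a'|_\mu$; $\mu[a'[j]\mapsto[\![ae]\!]_\rho]$; obs $\mathrm{write}(a,i)$. Multi-step $\xrightarrow[D]{O}{}_i^*$ is the reflexive-transitive closure collecting directives $D$ and observations $O$. *)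

theory Defs
  imports Main
begin

type_synonym vname = string
type_synonym aname = string
type_synonym val = nat
type_synonym label = bool  \<comment> \<open>True = public, False = secret\<close>
type_synonym state = "vname \<Rightarrow> val"
type_synonym astate = "aname \<Rightarrow> val list"  \<comment> \<open>size of a = length, contents = nth\<close>

datatype exp =
    ANum val
  | AVar vname
  | AOp "val list \<Rightarrow> val" "exp list"
  | ACond bexp exp exp
and bexp =
    BTrue
  | BFalse
  | BCmp "val \<Rightarrow> val \<Rightarrow> bool" exp exp
  | BOp "bool list \<Rightarrow> bool" "bexp list"

datatype com =
    Skip
  | Asgn vname exp
  | Seq com com
  | If bexp com com
  | While bexp com
  | ARead vname aname exp       \<comment> \<open>X <- a[e]\<close>
  | AWrite aname exp exp        \<comment> \<open>a[e] <- e'\<close>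

primrec aeval :: "exp \<Rightarrow> state \<Rightarrow> val"
  and beval :: "bexp \<Rightarrow> state \<Rightarrow> bool" where
  "aeval (ANum n) s = n"
| "aeval (AVar x) s = s x"
| "aeval (AOp f es) s = f (map (\<lambda>e. aeval e s) es)"
| "aeval (ACond b e1 e2) s = (if beval b s then aeval e1 s else aeval e2 s)"
| "beval BTrue s = True"
| "beval BFalse s = False"
| "beval (BCmp r e1 e2) s = r (aeval e1 s) (aeval e2 s)"
| "beval (BOp f bs) s = f (map (\<lambda>b. beval b s) bs)"

primrec avars :: "exp \<Rightarrow> vname set"
  and bvars :: "bexp \<Rightarrow> vname set" where
  "avars (ANum n) = {}"
| "avars (AVar x) = {x}"
| "avars (AOp f es) = \<Union> (set (map avars es))"
| "avars (ACond b e1 e2) = bvars b \<union> avars e1 \<union> avars e2"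
| "bvars BTrue = {}"
| "bvars BFalse = {}"
| "bvars (BCmp r e1 e2) = avars e1 \<union> avars e2"
| "bvars (BOp f bs) = \<Union> (set (map bvars bs))"

definition can_flow :: "label \<Rightarrow> label \<Rightarrow> bool" where
  "can_flow l1 l2 \<longleftrightarrow> (l2 \<longrightarrow> l1)"

definition join :: "label \<Rightarrow> label \<Rightarrow> label" where
  "join l1 l2 = (l1 \<and> l2)"

definition label_of_aexp :: "(vname \<Rightarrow> label) \<Rightarrow> exp \<Rightarrow> label" where
  "label_of_aexp P e \<longleftrightarrow> (\<forall>x\<in>avars e. P x)"

definition label_of_bexp :: "(vname \<Rightarrow> label) \<Rightarrow> bexp \<Rightarrow> label" where
  "label_of_bexp P b \<longleftrightarrow> (\<forall>x\<in>bvars b. P x)"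

definition pub_equiv :: "(vname \<Rightarrow> label) \<Rightarrow> state \<Rightarrow> state \<Rightarrow> bool" where
  "pub_equiv P s1 s2 \<longleftrightarrow> (\<forall>x. P x \<longrightarrow> s1 x = s2 x)"

definition apub_equiv :: "(aname \<Rightarrow> label) \<Rightarrow> astate \<Rightarrow> astate \<Rightarrow> bool" where
  "apub_equiv PA m1 m2 \<longleftrightarrow>
     (\<forall>a. PA a \<longrightarrow> length (m1 a) = length (m2 a) \<and> (\<forall>i < length (m1 a). m1 a ! i = m2 a ! i))"

inductive well_typed :: "(vname \<Rightarrow> label) \<Rightarrow> (aname \<Rightarrow> label) \<Rightarrow> label \<Rightarrow> com \<Rightarrow> bool" where
  WT_Skip: "well_typed P PA pc Skip"
| WT_Asgn: "can_flow (join pc (label_of_aexp P e)) (P X) \<Longrightarrow> well_typed P PA pc (Asgn X e)"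
| WT_Seq: "well_typed P PA pc c1 \<Longrightarrow> well_typed P PA pc c2 \<Longrightarrow> well_typed P PA pc (Seq c1 c2)"
| WT_If: "well_typed P PA (join pc (label_of_bexp P b)) c1 \<Longrightarrow>
          well_typed P PA (join pc (label_of_bexp P b)) c2 \<Longrightarrow> well_typed P PA pc (If b c1 c2)"
| WT_While: "well_typed P PA (join pc (label_of_bexp P b)) c \<Longrightarrow> well_typed P PA pc (While b c)"
| WT_ARead: "can_flow (join (join pc (label_of_aexp P i)) (PA a)) (P X) \<Longrightarrow>
             well_typed P PA pc (ARead X a i)"
| WT_AWrite: "can_flow (join (join pc (label_of_aexp P i)) (label_of_aexp P e)) (PA a) \<Longrightarrow>
              well_typed P PA pc (AWrite a i e)"

datatype observation = OBranch bool | ORead aname nat | OWrite aname nat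

datatype direction = DStep | DForce | DLoad aname nat | DStore aname nat

type_synonym config = "com \<times> state \<times> astate \<times> bool"

inductive ideal_step :: "(vname \<Rightarrow> label) \<Rightarrow> config \<Rightarrow> direction option \<Rightarrow> observation option
                          \<Rightarrow> config \<Rightarrow> bool" where
  ISM_Asgn: "ideal_step P (Asgn X e, s, m, b) None None (Skip, s(X := aeval e s), m, b)"
| ISM_Seq: "ideal_step P (c1, s, m, b) d ob (c1', s', m', b') \<Longrightarrow>
            ideal_step P (Seq c1 c2, s, m, b) d ob (Seq c1' c2, s', m', b')"
| ISM_Seq_Skip: "ideal_step P (Seq Skip c2, s, m, b) None None (c2, s, m, b)"
| ISM_While: "ideal_step P (While be c, s, m, b) None None
                (If be (Seq c (While be c)) Skip, s, m, b)"
| ISM_If: "v = ((label_of_bexp P be \<or> \<not> b) \<and> beval be s) \<Longrightarrow>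
           ideal_step P (If be c1 c2, s, m, b) (Some DStep) (Some (OBranch v))
             (if v then c1 else c2, s, m, b)"
| ISM_If_F: "v = ((label_of_bexp P be \<or> \<not> b) \<and> beval be s) \<Longrightarrow>
           ideal_step P (If be c1 c2, s, m, b) (Some DForce) (Some (OBranch v))
             (if v then c2 else c1, s, m, True)"
| ISM_ARead: "i = (if (\<not> label_of_aexp P ie \<or> P X) \<and> b then 0 else aeval ie s) \<Longrightarrow>
              i < length (m a) \<Longrightarrow>
              ideal_step P (ARead X a ie, s, m, b) (Some DStep) (Some (ORead a i))
                (Skip, s(X := m a ! i), m, b)"
| ISM_ARead_U: "b \<Longrightarrow> label_of_aexp P ie \<Longrightarrow> \<not> P X \<Longrightarrow>
              i = aeval ie s \<Longrightarrow> i \<ge> length (m a) \<Longrightarrow> j < length (m a') \<Longrightarrow>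
              ideal_step P (ARead X a ie, s, m, b) (Some (DLoad a' j)) (Some (ORead a i))
                (Skip, s(X := m a' ! j), m, b)"
| ISM_AWrite: "i = (if (\<not> label_of_aexp P ie \<or> \<not> label_of_aexp P ae) \<and> b then 0 else aeval ie s) \<Longrightarrow>
              i < length (m a) \<Longrightarrow>
              ideal_step P (AWrite a ie ae, s, m, b) (Some DStep) (Some (OWrite a i))
                (Skip, s, m(a := (m a)[i := aeval ae s]), b)"
| ISM_AWrite_U: "b \<Longrightarrow> label_of_aexp P ie \<Longrightarrow> label_of_aexp P ae \<Longrightarrow>
              i = aeval ie s \<Longrightarrow> i \<ge> length (m a) \<Longrightarrow> j < length (m a') \<Longrightarrow>
              ideal_step P (AWrite a ie ae, s, m, b) (Some (DStore a' j)) (Some (OWrite a i))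
                (Skip, s, m(a' := (m a')[j := aeval ae s]), b)"

inductive ideal_steps :: "(vname \<Rightarrow> label) \<Rightarrow> config \<Rightarrow> direction list \<Rightarrow> observation list
                           \<Rightarrow> config \<Rightarrow> bool" where
  ISMs_Refl: "ideal_steps P cfg [] [] cfg"
| ISMs_Step: "ideal_step P cfg d ob cfg' \<Longrightarrow> ideal_steps P cfg' ds obs cfg'' \<Longrightarrow>
              ideal_steps P cfg (case_option [] (\<lambda>x. [x]) d @ ds)
                                 (case_option [] (\<lambda>x. [x]) ob @ obs) cfg''"

end

theory Submission
  imports Defs
begin

lemma eval_eq:
  "(\<forall>x\<in>avars e. P x) \<Longrightarrow> pub_equiv P s1 s2 \<Longrightarrow> aeval e s1 = aeval e s2"
  "(\<forall>x\<in>bvars b. P x) \<Longrightarrow> pub_equiv P s1 s2 \<Longrightarrow> beval b s1 = beval b s2"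
proof (induction e and b)
  case (AOp f es) then show ?case by (auto intro!: arg_cong[where f=f] map_cong)
next
  case (BOp f bs) then show ?case by (auto intro!: arg_cong[where f=f] map_cong)
qed (auto simp: pub_equiv_def)

lemma aeq: "label_of_aexp P e \<Longrightarrow> pub_equiv P s1 s2 \<Longrightarrow> aeval e s1 = aeval e s2"
  using eval_eq(1) label_of_aexp_def by blast
lemma beq: "label_of_bexp P e \<Longrightarrow> pub_equiv P s1 s2 \<Longrightarrow> beval e s1 = beval e s2"
  using eval_eq(2) label_of_bexp_def by blast

lemma step_none: "ideal_step P cfg d ob cfg' \<Longrightarrow> (d = None \<longleftrightarrow> ob = None)"
  by (induction rule: ideal_step.induct) auto

lemma steps_len: "ideal_steps P cfg ds obs cfg' \<Longrightarrow> length ds = length obs"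
  by (induction rule: ideal_steps.induct) (auto dest: step_none split: option.splits)

inductive_cases SkipE: "ideal_step P (Skip, s, m, b) d ob cfg'"
inductive_cases AsgnE: "ideal_step P (Asgn X e, s, m, b) d ob cfg'"
inductive_cases SeqE: "ideal_step P (Seq c1 c2, s, m, b) d ob cfg'"
inductive_cases IfE: "ideal_step P (If be c1 c2, s, m, b) d ob cfg'"
inductive_cases WhileE: "ideal_step P (While be c, s, m, b) d ob cfg'"
inductive_cases AReadE: "ideal_step P (ARead X a ie, s, m, b) d ob cfg'"
inductive_cases AWriteE: "ideal_step P (AWrite a ie ae, s, m, b) d ob cfg'"

inductive_cases WT_SkipE: "well_typed P PA pc Skip"
inductive_cases WT_AsgnE: "well_typed P PA pc (Asgn X e)"
inductive_cases WT_SeqE: "well_typed P PA pc (Seq c1 c2)"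
inductive_cases WT_IfE: "well_typed P PA pc (If be c1 c2)"
inductive_cases WT_WhileE: "well_typed P PA pc (While be c)"
inductive_cases WT_AReadE: "well_typed P PA pc (ARead X a ie)"
inductive_cases WT_AWriteE: "well_typed P PA pc (AWrite a ie ae)"

lemma wt_mono: "well_typed P PA pc c \<Longrightarrow> (pc \<longrightarrow> pc') \<Longrightarrow> well_typed P PA pc' c"
proof (induction arbitrary: pc' rule: well_typed.induct)
  case (WT_If P PA pc b c1 c2) then show ?case by (intro well_typed.intros) (auto simp: join_def)
next
  case (WT_While P PA pc b c) then show ?case by (intro well_typed.intros) (auto simp: join_def)
qed (intro well_typed.intros; auto simp: can_flow_def join_def)+

lemma wt_true: "well_typed P PA pc c \<Longrightarrow> well_typed P PA True c"
  using wt_mono by blast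

lemma wt_unfold: "well_typed P PA pc (While be c) \<Longrightarrow>
  \<exists>pc. well_typed P PA pc (If be (Seq c (While be c)) Skip)"
  apply (erule WT_WhileE)
  apply (rule exI[of _ pc])
  apply (intro well_typed.intros)
   apply assumption
  apply (erule wt_mono, simp add: join_def)
  done

lemma ex_skip[simp]: "\<exists>pc. well_typed P PA pc Skip" by (auto intro: WT_Skip)

definition rel where
  "rel P PA cfg1 cfg2 \<longleftrightarrow> (\<exists>c s1 s2 m1 m2 pc. cfg1 = (c,s1,m1,True) \<and> cfg2 = (c,s2,m2,True) \<and>
     well_typed P PA pc c \<and> pub_equiv P s1 s2 \<and> apub_equiv PA m1 m2)"

lemma step_rel:
  "ideal_step P cfg1 d1 o1 cfg1' \<Longrightarrow> cfg1 = (c,s1,m1,True) \<Longrightarrow>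
   ideal_step P (c,s2,m2,True) d2 o2 cfg2' \<Longrightarrow> well_typed P PA pc c \<Longrightarrow>
   pub_equiv P s1 s2 \<Longrightarrow> apub_equiv PA m1 m2 \<Longrightarrow>
   (d1 = None \<longleftrightarrow> d2 = None) \<and> (d1 = d2 \<longrightarrow> o1 = o2 \<and> rel P PA cfg1' cfg2')"
proof (induction arbitrary: c s1 m1 d2 o2 cfg2' pc rule: ideal_step.induct)
  case (ISM_Asgn P X e s m b)
  have "label_of_aexp P e \<Longrightarrow> aeval e s1 = aeval e s2" using aeq ISM_Asgn.prems(4) by blast
  with ISM_Asgn show ?case
    by (auto elim!: AsgnE WT_AsgnE simp: rel_def can_flow_def join_def pub_equiv_def
        intro: WT_Skip dest: aeq[of P e s1 s2 for s1 s2])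
next
  case (ISM_Seq P c1 s m b d ob c1' s' m' b' c2)
  have st2: "ideal_step P (Seq c1 c2, s2, m2, True) d2 o2 cfg2'" using ISM_Seq.prems(1,2) by auto
  from st2 show ?case
  proof (rule SeqE)
    fix c1'' s'' m'' b''
    assume A: "cfg2' = (Seq c1'' c2, s'', m'', b'')"
      "ideal_step P (c1, s2, m2, True) d2 o2 (c1'', s'', m'', b'')"
    from ISM_Seq.prems obtain pc where "well_typed P PA pc c1" "well_typed P PA pc c2"
      by (auto elim: WT_SeqE)
    note IH = ISM_Seq.IH[OF _ A(2) this(1)]
    from IH ISM_Seq.prems(1,4,5) have I: "(d = None) = (d2 = None) \<and> (d = d2 \<longrightarrow> ob = o2 \<and> rel P PA (c1', s', m', b') (c1'', s'', m'', b''))"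
      by auto
    have "well_typed P PA True c2" using wt_true \<open>well_typed P PA pc c2\<close> by blast
    then have "rel P PA (c1', s', m', b') (c1'', s'', m'', b'') \<Longrightarrow> rel P PA (Seq c1' c2, s', m', b') cfg2'"
      unfolding rel_def A(1) by (auto intro!: WT_Seq dest: wt_true)
    with I show ?thesis by blast
  next
    assume "c1 = Skip" with ISM_Seq show ?thesis by (auto elim: SkipE)
  qed
next
  case (ISM_Seq_Skip P c2 s m b)
  have st2: "ideal_step P (Seq Skip c2, s2, m2, True) d2 o2 cfg2'" using ISM_Seq_Skip.prems(1,2) by auto
  from st2 show ?case
  proof (rule SeqE)
    fix c1'' s'' m'' b''
    assume "ideal_step P (Skip, s2, m2, True) d2 o2 (c1'', s'', m'', b'')"
    then show ?thesis by (auto elim: SkipE)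
  next
    assume "d2 = None" "o2 = None" "cfg2' = (c2, s2, m2, True)"
    with ISM_Seq_Skip show ?thesis by (auto simp: rel_def elim: WT_SeqE)
  qed
next
  case (ISM_While P be c s m b)
  then show ?case
    by (auto elim!: WhileE simp: rel_def dest: wt_unfold)
next
  case (ISM_If v be b s c1 c2 m)
  then show ?case
    by (auto elim!: IfE WT_IfE simp: rel_def dest: beq)
next
  case (ISM_If_F v be b s c1 c2 m)
  then show ?case
    by (auto elim!: IfE WT_IfE simp: rel_def dest: beq)
next
  case (ISM_ARead i ie X b s m a)
  then show ?case
    apply (auto elim!: AReadE WT_AReadE simp: rel_def can_flow_def join_def intro!: WT_Skip)
    apply (auto simp: pub_equiv_def apub_equiv_def dest: aeq)
    done
next
  case (ISM_ARead_U b ie X i s m a j a')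
  then show ?case
    apply (auto elim!: AReadE WT_AReadE simp: rel_def can_flow_def join_def intro!: WT_Skip)
    apply (auto simp: pub_equiv_def apub_equiv_def dest: aeq)
    done
next
  case (ISM_AWrite i ie ae b s m a)
  then show ?case
    apply (auto elim!: AWriteE WT_AWriteE simp: rel_def can_flow_def join_def intro!: WT_Skip)
    apply (auto simp: apub_equiv_def nth_list_update dest: aeq)
    done
next
  case (ISM_AWrite_U b ie ae i s m a j a')
  then show ?case
    apply (auto elim!: AWriteE WT_AWriteE simp: rel_def can_flow_def join_def intro!: WT_Skip)
    apply (auto simp: apub_equiv_def nth_list_update dest: aeq)
    done
qed

lemma steps_rel:
  "ideal_steps P cfg1 ds obs1 cfg1' \<Longrightarrow> rel P PA cfg1 cfg2 \<Longrightarrow>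
   ideal_steps P cfg2 ds obs2 cfg2' \<Longrightarrow> obs1 = obs2"
proof (induction arbitrary: cfg2 obs2 cfg2' rule: ideal_steps.induct)
  case (ISMs_Refl P cfg)
  then show ?case using steps_len by fastforce
next
  case (ISMs_Step P cfg d ob cfg' ds obs cfg'')
  note Oh = ISMs_Step.hyps and OIH = ISMs_Step.IH and Op = ISMs_Step.prems
  from ISMs_Step.prems(2) show ?case
  proof cases
    case ISMs_Refl
    then have "d = None" "ds = []" by (auto split: option.splits)
    with ISMs_Step.hyps steps_len[OF ISMs_Step.hyps(2)] step_none[OF ISMs_Step.hyps(1)]
    show ?thesis using ISMs_Refl by auto
  next
    case (ISMs_Step d2 ob2 cfg2'' ds2 obs2')
    from Op(1) obtain c s1 s2 m1 m2 pc where R: "cfg = (c,s1,m1,True)"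
      "cfg2 = (c,s2,m2,True)" "well_typed P PA pc c" "pub_equiv P s1 s2" "apub_equiv PA m1 m2"
      by (auto simp: rel_def)
    have st: "ideal_step P cfg2 d2 ob2 cfg2''" and sts: "ideal_steps P cfg2'' ds2 obs2' cfg2'"
      and dseq: "case_option [] (\<lambda>x. [x]) d @ ds = case_option [] (\<lambda>x. [x]) d2 @ ds2"
      and obeq: "obs2 = case_option [] (\<lambda>x. [x]) ob2 @ obs2'"
      using ISMs_Step by auto
    note SR = step_rel[OF Oh(1) R(1) st[unfolded R(2)] R(3-5)]
    have "d = d2 \<and> ds = ds2" using SR dseq
      by (auto split: option.splits)
    with SR OIH[of cfg2'' obs2' cfg2'] sts obeq show ?thesis by auto
  qed
qed

theorem lemma5p3:
  fixes P :: "vname \<Rightarrow> label" and PA :: "aname \<Rightarrow> label" and c :: com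
  assumes "well_typed P PA True c"
    and "pub_equiv P s1 s2"
    and "apub_equiv PA m1 m2"
  shows "\<forall>ds obs1 obs2 cfg1 cfg2.
           ideal_steps P (c, s1, m1, True) ds obs1 cfg1 \<longrightarrow>
           ideal_steps P (c, s2, m2, True) ds obs2 cfg2 \<longrightarrow> obs1 = obs2"
  using assms steps_rel[of P _ _ _ _ PA] unfolding rel_def by blast

end
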